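(* Let $\mathcal{I}$ be an interval hypergraph on $[n]$, $A$ an acyclic orientation of $\mathcal{I}$, and $i\in[n]$ such that there is $I\in\mathcal{I}$ with $i=A(I)<\max(I)$. Then there exists $j>i$ such that the orientation $B$ obtained from $A$ by flipping $i$ to $j$ (i.e. $B(H)=j$ if $A(H)=i$ and $j\in H$, and $B(H)=A(H)$ otherwise) is acyclic. Symmetrically, if there is $I\in\mathcal{I}$ with $i=A(I)>\min(I)$, there exists $j<i$ such that the orientation obtained from $A$ by flipping $i$ to $j$ (defined by the same formula) is acyclic.
   Context: An interval hypergraph $\mathcal{I}$ on $[n]$ is a collection of intervals of $[n]$ containing all singletons. An orientation is a map $O:\mathcal{I}\to[n]$ with $O(I)\in I$; it is acyclic if there are no $H_1,\dots,H_k$, $k\ge2$, with $O(H_{i+1})\in H_i\setminus\{O(H_i)\}$ for $i\in[k-1]$ and $O(H_1)\in H_k\setminus\{O(H_k)\}$. *)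

theory Defs
  imports Main
begin

definition is_interval :: "nat \<Rightarrow> nat set \<Rightarrow> bool" where
  "is_interval n H \<longleftrightarrow> (\<exists>a b. 1 \<le> a \<and> a \<le> b \<and> b \<le> n \<and> H = {a..b})"

definition interval_hypergraph :: "nat \<Rightarrow> nat set set \<Rightarrow> bool" where
  "interval_hypergraph n \<I> \<longleftrightarrow>
     (\<forall>H\<in>\<I>. is_interval n H) \<and> (\<forall>i\<in>{1..n}. {i} \<in> \<I>)"

definition orientation :: "nat set set \<Rightarrow> (nat set \<Rightarrow> nat) \<Rightarrow> bool" where
  "orientation \<I> Or \<longleftrightarrow> (\<forall>H\<in>\<I>. Or H \<in> H)"

definition acyclic_orientation :: "nat set set \<Rightarrow> (nat set \<Rightarrow> nat) \<Rightarrow> bool" where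
  "acyclic_orientation \<I> Or \<longleftrightarrow> orientation \<I> Or \<and>
     \<not> (\<exists>k Hs. k \<ge> 2 \<and> (\<forall>t<k. Hs t \<in> \<I>) \<and>
          (\<forall>t<k - 1. Or (Hs (Suc t)) \<in> Hs t - {Or (Hs t)}) \<and>
          Or (Hs 0) \<in> Hs (k - 1) - {Or (Hs (k - 1))})"

definition flip :: "(nat set \<Rightarrow> nat) \<Rightarrow> nat \<Rightarrow> nat \<Rightarrow> nat set \<Rightarrow> nat" where
  "flip A i j = (\<lambda>H. if A H = i \<and> j \<in> H then j else A H)"

end

theory Submission
  imports Defs
begin

lemma rank_acyclic:
  assumes "orientation \<I> Or"
    and r: "\<forall>H\<in>\<I>. \<forall>v\<in>H. v \<noteq> Or H \<longrightarrow> r v < (r (Or H) :: nat)"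
  shows "acyclic_orientation \<I> Or"
proof -
  have False if k2: "k \<ge> 2" and Hs: "\<forall>t<k. Hs t \<in> \<I>"
    and st: "\<forall>t<k - 1. Or (Hs (Suc t)) \<in> Hs t - {Or (Hs t)}"
    and cl: "Or (Hs 0) \<in> Hs (k - 1) - {Or (Hs (k - 1))}" for k Hs
  proof -
    have "\<forall>t<k. r (Or (Hs t)) + t \<le> r (Or (Hs 0))"
    proof (intro allI impI)
      fix t assume "t < k" then show "r (Or (Hs t)) + t \<le> r (Or (Hs 0))"
      proof (induction t)
        case 0 then show ?case by simp
      next
        case (Suc t)
        then have "t < k - 1" by simp
        with st Hs Suc(2) r have "r (Or (Hs (Suc t))) < r (Or (Hs t))"
          by (metis DiffD1 DiffD2 Suc_lessD insertI1)
        with Suc show ?case by simp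
      qed
    qed
    moreover have "k - 1 < k" using k2 by simp
    ultimately have a: "r (Or (Hs (k - 1))) + (k - 1) \<le> r (Or (Hs 0))" by blast
    have "Hs (k - 1) \<in> \<I>" using Hs k2 by simp
    with cl r have "r (Or (Hs 0)) < r (Or (Hs (k - 1)))" by blast
    with a show False by simp
  qed
  with assms(1) show ?thesis unfolding acyclic_orientation_def by blast
qed

lemma acyclic_rank:
  assumes sub: "\<forall>H\<in>\<I>. H \<subseteq> {1..n}"
    and ac: "acyclic_orientation \<I> Or"
  shows "\<exists>r::nat\<Rightarrow>nat. \<forall>H\<in>\<I>. \<forall>v\<in>H. v \<noteq> Or H \<longrightarrow> r v < r (Or H)"
proof -
  define R where "R = {(v, Or H) | v H. H \<in> \<I> \<and> v \<in> H \<and> v \<noteq> Or H}"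
  have orient: "\<forall>H\<in>\<I>. Or H \<in> H" using ac unfolding acyclic_orientation_def orientation_def by blast
  have noloop: "(v, v) \<notin> R\<^sup>+" for v
  proof
    assume "(v, v) \<in> R\<^sup>+"
    then have "\<exists>k>0. (v, v) \<in> R ^^ k" by (rule trancl_power[THEN iffD1])
    then obtain k where k: "k > 0" "(v, v) \<in> R ^^ k" by blast
    have "\<exists>f. f 0 = v \<and> f k = v \<and> (\<forall>l<k. (f l, f (Suc l)) \<in> R)"
      using k(2) by (rule relpow_fun_conv[THEN iffD1])
    then obtain f where f: "f 0 = v" "f k = v" "\<forall>l<k. (f l, f (Suc l)) \<in> R"
      by blast
    have ex: "\<exists>H. H \<in> \<I> \<and> f l \<in> H \<and> f l \<noteq> Or H \<and> Or H = f (Suc l)" if "l < k" for l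
    proof -
      have "(f l, f (Suc l)) \<in> R" using f(3) that by blast
      then show ?thesis unfolding R_def by auto
    qed
    have "\<forall>l. \<exists>H. l < k \<longrightarrow> H \<in> \<I> \<and> f l \<in> H \<and> f l \<noteq> Or H \<and> Or H = f (Suc l)"
      using ex by blast
    from choice[OF this] obtain G where G0: "\<forall>l. l < k \<longrightarrow> G l \<in> \<I> \<and> f l \<in> G l \<and> f l \<noteq> Or (G l) \<and> Or (G l) = f (Suc l)"
      by blast
    then have G: "\<And>l. l < k \<Longrightarrow> G l \<in> \<I> \<and> f l \<in> G l \<and> f l \<noteq> Or (G l) \<and> Or (G l) = f (Suc l)"
      by blast
    have "k \<noteq> 1" using G[of 0] f by auto
    with k have k2: "k \<ge> 2" by simp
    define Hs where "Hs t = G (k - 1 - t)" for t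
    have "\<forall>t<k. Hs t \<in> \<I>" using G unfolding Hs_def by simp
    moreover have "\<forall>t<k - 1. Or (Hs (Suc t)) \<in> Hs t - {Or (Hs t)}"
    proof (intro allI impI)
      fix t assume t: "t < k - 1"
      have e: "Suc (k - 1 - Suc t) = k - 1 - t" using t by simp
      have "Or (Hs (Suc t)) = f (k - 1 - t)" unfolding Hs_def using G[of "k - 1 - Suc t"] t e by simp
      moreover have "f (k - 1 - t) \<in> G (k - 1 - t) \<and> f (k - 1 - t) \<noteq> Or (G (k - 1 - t))"
        using G[of "k - 1 - t"] k2 by simp
      ultimately show "Or (Hs (Suc t)) \<in> Hs t - {Or (Hs t)}" unfolding Hs_def by simp
    qed
    moreover have "Or (Hs 0) \<in> Hs (k - 1) - {Or (Hs (k - 1))}"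
      unfolding Hs_def using G[of "k - 1"] G[of 0] k2 f by simp
    ultimately show False using ac k2 unfolding acyclic_orientation_def by blast
  qed
  define r where "r v = card {u. (u, v) \<in> R\<^sup>+}" for v
  have fin: "finite {u. (u, v) \<in> R\<^sup>+}" for v
  proof -
    have "{u. (u, v) \<in> R\<^sup>+} \<subseteq> Domain R" by (auto dest: tranclD)
    moreover have "Domain R \<subseteq> {1..n}" unfolding R_def using sub by auto
    ultimately show ?thesis by (meson finite_atLeastAtMost finite_subset)
  qed
  have "\<forall>H\<in>\<I>. \<forall>v\<in>H. v \<noteq> Or H \<longrightarrow> r v < r (Or H)"
  proof (intro ballI impI)
    fix H v assume H: "H \<in> \<I>" "v \<in> H" "v \<noteq> Or H"
    then have vw: "(v, Or H) \<in> R" unfolding R_def by blast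
    have "{u. (u, v) \<in> R\<^sup>+} \<subset> {u. (u, Or H) \<in> R\<^sup>+}"
    proof
      show "{u. (u, v) \<in> R\<^sup>+} \<subseteq> {u. (u, Or H) \<in> R\<^sup>+}" using vw by auto
      have "v \<in> {u. (u, Or H) \<in> R\<^sup>+}" using vw by auto
      moreover have "v \<notin> {u. (u, v) \<in> R\<^sup>+}" using noloop by auto
      ultimately show "{u. (u, v) \<in> R\<^sup>+} \<noteq> {u. (u, Or H) \<in> R\<^sup>+}" by blast
    qed
    then show "r v < r (Or H)" unfolding r_def using fin psubset_card_mono by blast
  qed
  then show ?thesis by blast
qed

lemma L_a: "(a::nat) < b \<Longrightarrow> (R+2)*a < (R+2)*b" by (rule mult_strict_left_mono) simp_all
lemma L_c: "(x::nat) \<le> R \<Longrightarrow> R < y \<Longrightarrow> (R+2)*R+1+x < (R+2)*y"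
proof -
  assume "x \<le> R" "R < y"
  then have "(R+2)*(R+1) \<le> (R+2)*y" by (intro mult_le_mono2) simp
  then show ?thesis using \<open>x \<le> R\<close> by (simp add: algebra_simps)
qed
lemma L_d: "(a::nat) \<le> R \<Longrightarrow> (R+2)*a < (R+2)*R+1+y"
proof -
  assume "a \<le> R"
  then have "(R+2)*a \<le> (R+2)*R" by (rule mult_le_mono2)
  then show ?thesis by simp
qed

lemma ivl_facts:
  assumes "interval_hypergraph n \<I>" "H \<in> \<I>"
  shows "H \<subseteq> {1..n}" "finite H" "H \<noteq> {}"
    "\<And>a b c. a \<in> H \<Longrightarrow> b \<in> H \<Longrightarrow> a \<le> c \<Longrightarrow> c \<le> b \<Longrightarrow> c \<in> H"
    "Max H \<in> H" "Min H \<in> H"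
proof -
  obtain a b where ab: "1 \<le> a" "a \<le> b" "b \<le> n" "H = {a..b}"
    using assms unfolding interval_hypergraph_def is_interval_def by blast
  show "H \<subseteq> {1..n}" "finite H" "H \<noteq> {}" using ab by auto
  show "\<And>x y c. x \<in> H \<Longrightarrow> y \<in> H \<Longrightarrow> x \<le> c \<Longrightarrow> c \<le> y \<Longrightarrow> c \<in> H" using ab by auto
  show "Max H \<in> H" "Min H \<in> H" using ab by (auto intro: Max_in Min_in)
qed


lemma flip_up:
  assumes ih: "interval_hypergraph n \<I>" and ac: "acyclic_orientation \<I> A"
    and I: "I \<in> \<I>" "A I = i" "i < Max I"
  shows "\<exists>j\<in>{1..n}. j > i \<and> acyclic_orientation \<I> (flip A i j)"
proof -
  have sub: "\<forall>H\<in>\<I>. H \<subseteq> {1..n}" using ivl_facts(1)[OF ih] by blast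
  obtain r :: "nat \<Rightarrow> nat" where r: "\<forall>H\<in>\<I>. \<forall>v\<in>H. v \<noteq> A H \<longrightarrow> r v < r (A H)"
    using acyclic_rank[OF sub ac] by blast
  have orient: "\<forall>H\<in>\<I>. A H \<in> H" using ac unfolding acyclic_orientation_def orientation_def by blast
  define U where "U = \<Union>{H\<in>\<I>. A H = i}"
  define T where "T = {x\<in>U. i < x}"
  have HU: "H \<subseteq> U" if "H \<in> \<I>" "A H = i" for H using that unfolding U_def by blast
  have "T \<subseteq> {1..n}" unfolding T_def U_def using sub by blast
  then have finT: "finite T" using finite_subset by blast
  have MT: "Max I \<in> T" unfolding T_def using HU[OF I(1,2)] ivl_facts(5)[OF ih I(1)] I(3) by blast
  have "Max (r ` T) \<in> r ` T" using finT MT by (intro Max_in) auto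
  then obtain j where jT: "j \<in> T" and jM: "r j = Max (r ` T)" by auto
  have jmax: "r x \<le> r j" if "x \<in> T" for x using jM finT that by simp
  from jT obtain H0 where H0: "H0 \<in> \<I>" "A H0 = i" "j \<in> H0" "i < j" unfolding T_def U_def by blast
  have "j \<noteq> A H0" using H0 by simp
  then have "r j < r (A H0)" using r H0(1,3) by blast
  then have rji: "r j < r i" using H0(2) by simp
  have jn: "j \<in> {1..n}" using sub H0 by blast
  have conv: "c \<in> H" if "H \<in> \<I>" "a \<in> H" "b \<in> H" "a \<le> c" "c \<le> b" for H a b c
    using ivl_facts(4)[OF ih that(1)] that by blast
  define X where "X = {j} \<union> {x. r j \<le> r x \<and> r x \<le> r i \<and> x \<notin> U \<and> i < x}"
  have Xf: "r x \<le> r i \<and> r j \<le> r x \<and> i < x" if "x \<in> X" for x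
    using that rji H0(4) unfolding X_def by auto
  have iX: "i \<notin> X" using Xf by blast
  have XU: "x \<in> X \<Longrightarrow> x \<in> U \<Longrightarrow> x = j" for x unfolding X_def by blast
  define r' where "r' x = (if x \<in> X then (r i + 2) * r i + 1 + r x else (r i + 2) * r x)" for x
  have "acyclic_orientation \<I> (flip A i j)"
  proof (rule rank_acyclic[where r = r'])
    show "orientation \<I> (flip A i j)" using orient unfolding orientation_def flip_def by auto
    show "\<forall>H\<in>\<I>. \<forall>v\<in>H. v \<noteq> flip A i j H \<longrightarrow> r' v < r' (flip A i j H)"
    proof (intro ballI impI)
      fix H v assume H: "H \<in> \<I>" and v: "v \<in> H" and vB: "v \<noteq> flip A i j H"
      show "r' v < r' (flip A i j H)"
      proof (cases "A H = i \<and> j \<in> H")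
        case True
        then have B: "flip A i j H = j" unfolding flip_def by simp
        have vX: "v \<notin> X" using XU HU[OF H] True v vB B by auto
        have "r v \<le> r i" using r H v True by (cases "v = i") fastforce+
        have jX: "j \<in> X" unfolding X_def by simp
        have "r' v = (r i + 2) * r v" "r' j = (r i + 2) * r i + 1 + r j" unfolding r'_def using vX jX by auto
        then show ?thesis unfolding B using L_d[OF \<open>r v \<le> r i\<close>, of "r j"] by simp
      next
        case False
        then have B: "flip A i j H = A H" unfolding flip_def by auto
        have rv: "r v < r (A H)" using r H v vB B by auto
        show ?thesis
        proof (cases "A H = i")
          case True
          then have "j \<notin> H" using False by blast
          then have vX: "v \<notin> X" using XU HU[OF H True] v by blast
          have rv': "r v < r i" using rv True by simp
          show ?thesis unfolding B r'_def using vX iX True L_a[OF rv', of "r i"] by simp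
        next
          case hi: False
          define h where "h = A H"
          show ?thesis
          proof (cases "h \<in> X")
            case True
            show ?thesis
            proof (cases "v \<in> X")
              case True
              then show ?thesis unfolding B r'_def using \<open>h \<in> X\<close> rv h_def by simp
            next
              case False
              have "r v \<le> r i" using rv Xf[OF \<open>h \<in> X\<close>] h_def by simp
              then show ?thesis unfolding B r'_def using \<open>h \<in> X\<close> False h_def L_d[OF \<open>r v \<le> r i\<close>, of "r h"] by simp
            qed
          next
            case hX: False
            show ?thesis
            proof (cases "v \<in> X")
              case False
              then show ?thesis unfolding B r'_def using hX rv h_def L_a[OF rv, of "r i"] by simp
            next
              case vX: True
              have "r i < r h"
              proof (rule ccontr)
                assume nh: "\<not> r i < r h"
                have rvh: "r j \<le> r v" "r v < r h" "i < v" using Xf[OF vX] rv h_def by auto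
                have hH: "h \<in> H" using orient H h_def by simp
                consider "h < i" | "i < h" "h \<in> U" | "i < h" "h \<notin> U" using hi h_def by fastforce
                then show False
                proof cases
                  case 1
                  then have "i \<in> H" using conv[OF H hH v] rvh by simp
                  then have "r i < r h" using r H hi h_def by fastforce
                  then show False using nh by simp
                next
                  case 2
                  then have "h \<in> T" unfolding T_def by blast
                  then show False using jmax rvh by fastforce
                next
                  case 3
                  then have "h \<in> X" unfolding X_def using rvh nh by simp
                  then show False using hX by simp
                qed
              qed
              moreover have "r v \<le> r i" using Xf[OF vX] by simp
              ultimately show ?thesis unfolding B r'_def using hX vX h_def L_c[of "r v" "r i" "r h"] by simp
            qed
          qed
        qed
      qed
    qed
  qed
  then show ?thesis using jn H0(4) by blast
qed

lemma flip_down: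
  assumes ih: "interval_hypergraph n \<I>" and ac: "acyclic_orientation \<I> A"
    and I: "I \<in> \<I>" "A I = i" "Min I < i"
  shows "\<exists>j\<in>{1..n}. j < i \<and> acyclic_orientation \<I> (flip A i j)"
proof -
  have sub: "\<forall>H\<in>\<I>. H \<subseteq> {1..n}" using ivl_facts(1)[OF ih] by blast
  obtain r :: "nat \<Rightarrow> nat" where r: "\<forall>H\<in>\<I>. \<forall>v\<in>H. v \<noteq> A H \<longrightarrow> r v < r (A H)"
    using acyclic_rank[OF sub ac] by blast
  have orient: "\<forall>H\<in>\<I>. A H \<in> H" using ac unfolding acyclic_orientation_def orientation_def by blast
  define U where "U = \<Union>{H\<in>\<I>. A H = i}"
  define T where "T = {x\<in>U. x < i}"
  have HU: "H \<subseteq> U" if "H \<in> \<I>" "A H = i" for H using that unfolding U_def by blast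
  have "T \<subseteq> {1..n}" unfolding T_def U_def using sub by blast
  then have finT: "finite T" using finite_subset by blast
  have MT: "Min I \<in> T" unfolding T_def using HU[OF I(1,2)] ivl_facts(6)[OF ih I(1)] I(3) by blast
  have "Max (r ` T) \<in> r ` T" using finT MT by (intro Max_in) auto
  then obtain j where jT: "j \<in> T" and jM: "r j = Max (r ` T)" by auto
  have jmax: "r x \<le> r j" if "x \<in> T" for x using jM finT that by simp
  from jT obtain H0 where H0: "H0 \<in> \<I>" "A H0 = i" "j \<in> H0" "j < i" unfolding T_def U_def by blast
  have "j \<noteq> A H0" using H0 by simp
  then have "r j < r (A H0)" using r H0(1,3) by blast
  then have rji: "r j < r i" using H0(2) by simp
  have jn: "j \<in> {1..n}" using sub H0 by blast
  have conv: "c \<in> H" if "H \<in> \<I>" "a \<in> H" "b \<in> H" "a \<le> c" "c \<le> b" for H a b c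
    using ivl_facts(4)[OF ih that(1)] that by blast
  define X where "X = {j} \<union> {x. r j \<le> r x \<and> r x \<le> r i \<and> x \<notin> U \<and> x < i}"
  have Xf: "r x \<le> r i \<and> r j \<le> r x \<and> x < i" if "x \<in> X" for x
    using that rji H0(4) unfolding X_def by auto
  have iX: "i \<notin> X" using Xf by blast
  have XU: "x \<in> X \<Longrightarrow> x \<in> U \<Longrightarrow> x = j" for x unfolding X_def by blast
  define r' where "r' x = (if x \<in> X then (r i + 2) * r i + 1 + r x else (r i + 2) * r x)" for x
  have "acyclic_orientation \<I> (flip A i j)"
  proof (rule rank_acyclic[where r = r'])
    show "orientation \<I> (flip A i j)" using orient unfolding orientation_def flip_def by auto
    show "\<forall>H\<in>\<I>. \<forall>v\<in>H. v \<noteq> flip A i j H \<longrightarrow> r' v < r' (flip A i j H)"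
    proof (intro ballI impI)
      fix H v assume H: "H \<in> \<I>" and v: "v \<in> H" and vB: "v \<noteq> flip A i j H"
      show "r' v < r' (flip A i j H)"
      proof (cases "A H = i \<and> j \<in> H")
        case True
        then have B: "flip A i j H = j" unfolding flip_def by simp
        have vX: "v \<notin> X" using XU HU[OF H] True v vB B by auto
        have "r v \<le> r i" using r H v True by (cases "v = i") fastforce+
        have jX: "j \<in> X" unfolding X_def by simp
        have "r' v = (r i + 2) * r v" "r' j = (r i + 2) * r i + 1 + r j" unfolding r'_def using vX jX by auto
        then show ?thesis unfolding B using L_d[OF \<open>r v \<le> r i\<close>, of "r j"] by simp
      next
        case False
        then have B: "flip A i j H = A H" unfolding flip_def by auto
        have rv: "r v < r (A H)" using r H v vB B by auto
        show ?thesis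
        proof (cases "A H = i")
          case True
          then have "j \<notin> H" using False by blast
          then have vX: "v \<notin> X" using XU HU[OF H True] v by blast
          have rv': "r v < r i" using rv True by simp
          show ?thesis unfolding B r'_def using vX iX True L_a[OF rv', of "r i"] by simp
        next
          case hi: False
          define h where "h = A H"
          show ?thesis
          proof (cases "h \<in> X")
            case True
            show ?thesis
            proof (cases "v \<in> X")
              case True
              then show ?thesis unfolding B r'_def using \<open>h \<in> X\<close> rv h_def by simp
            next
              case False
              have "r v \<le> r i" using rv Xf[OF \<open>h \<in> X\<close>] h_def by simp
              then show ?thesis unfolding B r'_def using \<open>h \<in> X\<close> False h_def L_d[OF \<open>r v \<le> r i\<close>, of "r h"] by simp
            qed
          next
            case hX: False
            show ?thesis
            proof (cases "v \<in> X")
              case False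
              then show ?thesis unfolding B r'_def using hX rv h_def L_a[OF rv, of "r i"] by simp
            next
              case vX: True
              have "r i < r h"
              proof (rule ccontr)
                assume nh: "\<not> r i < r h"
                have rvh: "r j \<le> r v" "r v < r h" "v < i" using Xf[OF vX] rv h_def by auto
                have hH: "h \<in> H" using orient H h_def by simp
                consider "i < h" | "h < i" "h \<in> U" | "h < i" "h \<notin> U" using hi h_def by fastforce
                then show False
                proof cases
                  case 1
                  then have "i \<in> H" using conv[OF H v hH] rvh by simp
                  then have "r i < r h" using r H hi h_def by fastforce
                  then show False using nh by simp
                next
                  case 2
                  then have "h \<in> T" unfolding T_def by blast
                  then show False using jmax rvh by fastforce
                next
                  case 3
                  then have "h \<in> X" unfolding X_def using rvh nh by simp
                  then show False using hX by simp
                qed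
              qed
              moreover have "r v \<le> r i" using Xf[OF vX] by simp
              ultimately show ?thesis unfolding B r'_def using hX vX h_def L_c[of "r v" "r i" "r h"] by simp
            qed
          qed
        qed
      qed
    qed
  qed
  then show ?thesis using jn H0(4) by blast
qed


theorem proposition3p16:
  fixes n :: nat and \<I> :: "nat set set" and A :: "nat set \<Rightarrow> nat" and i :: nat
  assumes "interval_hypergraph n \<I>"
    and "acyclic_orientation \<I> A"
  shows "((\<exists>I\<in>\<I>. i = A I \<and> A I < Max I) \<longrightarrow>
            (\<exists>j\<in>{1..n}. j > i \<and> acyclic_orientation \<I> (flip A i j)))
       \<and> ((\<exists>I\<in>\<I>. i = A I \<and> A I > Min I) \<longrightarrow>
            (\<exists>j\<in>{1..n}. j < i \<and> acyclic_orientation \<I> (flip A i j)))"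
  using flip_up[OF assms] flip_down[OF assms] by fastforce

end
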